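(* Let $R$ be an abelian ring (an associative ring with identity in which every idempotent is central). Then $R$ is weakly clean if and only if $R$ is weakly $r$-clean.
   Context: For a ring $R$ with identity, $U(R)$ denotes its units, $Idem(R)$ its idempotents, and $Reg(R)=\{r\in R:\ r=ryr \text{ for some } y\in R\}$ its (von Neumann) regular elements. An element $x\in R$ is weakly clean if $x=u+e$ or $x=u-e$ for some $u\in U(R)$, $e\in Idem(R)$; $R$ is weakly clean if all its elements are weakly clean. An element $x\in R$ is weakly $r$-clean if $x=r+e$ or $x=r-e$ for some $r\in Reg(R)$, $e\in Idem(R)$; $R$ is weakly $r$-clean if all its elements are weakly $r$-clean. *)

theory Defs
  imports Main
begin

definition units_of_ring :: "'a::ring_1 set" where
  "units_of_ring = {u. \<exists>v. u * v = 1 \<and> v * u = 1}"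

definition idems :: "'a::ring_1 set" where
  "idems = {e. e * e = e}"

definition regs :: "'a::ring_1 set" where
  "regs = {r. \<exists>y. r = r * y * r}"

definition weakly_clean_elem :: "'a::ring_1 \<Rightarrow> bool" where
  "weakly_clean_elem x \<longleftrightarrow>
     (\<exists>u\<in>units_of_ring. \<exists>e\<in>idems. x = u + e \<or> x = u - e)"

definition weakly_clean_ring :: "'a::ring_1 itself \<Rightarrow> bool" where
  "weakly_clean_ring _ \<longleftrightarrow> (\<forall>x::'a. weakly_clean_elem x)"

definition weakly_r_clean_elem :: "'a::ring_1 \<Rightarrow> bool" where
  "weakly_r_clean_elem x \<longleftrightarrow>
     (\<exists>r\<in>regs. \<exists>e\<in>idems. x = r + e \<or> x = r - e)"

definition weakly_r_clean_ring :: "'a::ring_1 itself \<Rightarrow> bool" where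
  "weakly_r_clean_ring _ \<longleftrightarrow> (\<forall>x::'a. weakly_r_clean_elem x)"

definition abelian_ring :: "'a::ring_1 itself \<Rightarrow> bool" where
  "abelian_ring _ \<longleftrightarrow> (\<forall>e::'a. e \<in> idems \<longrightarrow> (\<forall>x::'a. e * x = x * e))"

end

theory Submission
  imports Defs
begin

lemma reg_decomp:
  fixes r y :: "'a::ring_1"
  assumes ab: "\<And>e x :: 'a. e * e = e \<Longrightarrow> e * x = x * e"
    and r: "r = r * y * r"
  shows "\<exists>u v e. u * v = 1 \<and> v * u = 1 \<and> e * e = e \<and> r = u * e"
proof -
  define z where "z = y * r * y"
  have rzr: "r * z * r = r"
  proof -
    have "r * z * r = (r * y * r) * y * r" by (simp add: z_def mult.assoc)
    also have "\<dots> = r" using r by simp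
    finally show ?thesis .
  qed
  have zrz: "z * r * z = z"
  proof -
    have "z * r * z = y * (r * y * r) * y * r * y" by (simp add: z_def mult.assoc)
    also have "\<dots> = y * r * y * r * y" using r[symmetric] by (simp add: mult.assoc)
    also have "\<dots> = y * (r * y * r) * y" by (simp add: mult.assoc)
    also have "\<dots> = z" using r[symmetric] by (simp add: z_def mult.assoc)
    finally show ?thesis .
  qed
  define e where "e = r * z"
  define f where "f = z * r"
  have ee: "e * e = e" using rzr by (simp add: e_def mult.assoc[symmetric])
  have ff: "f * f = f" using zrz by (simp add: f_def mult.assoc[symmetric])
  have "e = r * z * r * z" using rzr by (simp add: e_def)
  also have "\<dots> = r * f * z" by (simp add: f_def mult.assoc)
  also have "\<dots> = f * r * z" using ab[OF ff] by simp
  also have "\<dots> = f * e" by (simp add: e_def mult.assoc)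
  finally have e1: "e = f * e" .
  have "f = z * r * z * r" using zrz by (simp add: f_def)
  also have "\<dots> = z * e * r" by (simp add: e_def mult.assoc)
  also have "\<dots> = e * z * r" using ab[OF ee] by simp
  also have "\<dots> = e * f" by (simp add: f_def mult.assoc)
  finally have f1: "f = e * f" .
  have ef: "e = f" using e1 f1 ab[OF ee, of f] by simp
  have re: "r * e = r" using rzr ef by (simp add: f_def mult.assoc[symmetric])
  have er: "e * r = r" using rzr by (simp add: e_def mult.assoc[symmetric])
  have ze: "z * e = z" using zrz by (simp add: e_def mult.assoc[symmetric])
  have ez: "e * z = z" using zrz ef by (simp add: f_def mult.assoc[symmetric])
  define u where "u = r + (1 - e)"
  define v where "v = z + (1 - e)"
  have "u * v = r * z + r * (1 - e) + (1 - e) * z + (1 - e) * (1 - e)"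
    by (simp add: u_def v_def algebra_simps)
  also have "\<dots> = 1" using re ez ee by (simp add: e_def[symmetric] algebra_simps)
  finally have uv: "u * v = 1" .
  have "v * u = z * r + z * (1 - e) + (1 - e) * r + (1 - e) * (1 - e)"
    by (simp add: u_def v_def algebra_simps)
  also have "\<dots> = 1" using ze er ee ef by (simp add: f_def[symmetric] algebra_simps)
  finally have vu: "v * u = 1" .
  have "u * e = r" using re ee by (simp add: u_def algebra_simps)
  with uv vu ee show ?thesis by metis
qed

lemma cen_mult:
  fixes e a b c d :: "'a::ring_1"
  assumes ce: "\<And>x. e * x = x * e" and ee: "e * e = e"
  shows "(e * a + (1 - e) * b) * (e * c + (1 - e) * d) = e * (a * c) + (1 - e) * (b * d)"
proof -
  define f where "f = 1 - e"
  have cf: "\<And>x. f * x = x * f" using ce by (simp add: f_def algebra_simps)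
  have ff: "f * f = f" using ee by (simp add: f_def algebra_simps)
  have ef: "e * f = 0" using ee by (simp add: f_def algebra_simps)
  have fe: "f * e = 0" using ee by (simp add: f_def algebra_simps)
  have p1: "e * a * (e * c) = e * (a * c)"
  proof -
    have "e * a * (e * c) = e * (a * e) * c" by (simp only: mult.assoc)
    also have "\<dots> = (e * e) * a * c" using ce[of a] by (simp only: mult.assoc)
    finally show ?thesis using ee by (simp only: mult.assoc)
  qed
  have p2: "e * a * (f * d) = 0"
  proof -
    have "e * a * (f * d) = e * (a * f) * d" by (simp only: mult.assoc)
    also have "\<dots> = (e * f) * a * d" using cf[of a] by (simp only: mult.assoc)
    finally show ?thesis using ef by simp
  qed
  have p3: "f * b * (e * c) = 0"
  proof -
    have "f * b * (e * c) = f * (b * e) * c" by (simp only: mult.assoc)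
    also have "\<dots> = (f * e) * b * c" using ce[of b] by (simp only: mult.assoc)
    finally show ?thesis using fe by simp
  qed
  have p4: "f * b * (f * d) = f * (b * d)"
  proof -
    have "f * b * (f * d) = f * (b * f) * d" by (simp only: mult.assoc)
    also have "\<dots> = (f * f) * b * d" using cf[of b] by (simp only: mult.assoc)
    finally show ?thesis using ff by (simp only: mult.assoc)
  qed
  have "(e * a + f * b) * (e * c + f * d) = e * a * (e * c) + e * a * (f * d) + (f * b * (e * c) + f * b * (f * d))"
    by (simp only: distrib_left distrib_right add.assoc add.left_commute)
  also have "\<dots> = e * (a * c) + f * (b * d)" using p1 p2 p3 p4 by simp
  finally show ?thesis by (simp only: f_def)
qed

lemma clean_of_r:
  fixes u v e g :: "'a::ring_1"
  assumes ab: "\<And>e x :: 'a. e * e = e \<Longrightarrow> e * x = x * e"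
    and uv: "u * v = 1" "v * u = 1" and ee: "e * e = e" and gg: "g * g = g"
  shows "weakly_clean_elem (u * e + g) \<and> weakly_clean_elem (u * e - g)"
proof -
  define h where "h = e * g + (1 - e) * (1 - g)"
  have ce: "\<And>x. e * x = x * e" using ab[OF ee] .
  have g2: "(1 - g) * (1 - g) = 1 - g" using gg by (simp add: algebra_simps)
  have hh: "h * h = h" unfolding h_def cen_mult[OF ce ee] using gg g2 by simp
  have unit_lemma: "\<And>s. s * s = 1 \<Longrightarrow> e * u + (1 - e) * s \<in> units_of_ring"
  proof -
    fix s :: 'a assume ss: "s * s = 1"
    have a: "(e * u + (1 - e) * s) * (e * v + (1 - e) * s) = 1"
      unfolding cen_mult[OF ce ee] using uv ss by simp
    have b: "(e * v + (1 - e) * s) * (e * u + (1 - e) * s) = 1"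
      unfolding cen_mult[OF ce ee] using uv ss by simp
    show "e * u + (1 - e) * s \<in> units_of_ring" unfolding units_of_ring_def using a b by blast
  qed
  have s1: "(2 * g - 1) * (2 * g - 1) = (1::'a)" using gg by (simp add: algebra_simps mult_2 mult_2_right)
  have s2: "(1 - 2 * g) * (1 - 2 * g) = (1::'a)" using gg by (simp add: algebra_simps mult_2 mult_2_right)
  have hI: "h \<in> idems" using hh by (simp add: idems_def)
  have "u * e + g = (e * u + (1 - e) * (2 * g - 1)) + h"
    using ce[of u] by (simp add: h_def algebra_simps mult_2 mult_2_right)
  hence A: "weakly_clean_elem (u * e + g)"
    unfolding weakly_clean_elem_def using unit_lemma[OF s1] hI by blast
  have "u * e - g = (e * u + (1 - e) * (1 - 2 * g)) - h"
    using ce[of u] by (simp add: h_def algebra_simps mult_2 mult_2_right)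
  hence B: "weakly_clean_elem (u * e - g)"
    unfolding weakly_clean_elem_def using unit_lemma[OF s2] hI by blast
  show ?thesis using A B by blast
qed

theorem theorem2p8:
  assumes "abelian_ring TYPE('a::ring_1)"
  shows "weakly_clean_ring TYPE('a) \<longleftrightarrow> weakly_r_clean_ring TYPE('a)"
proof
  assume H: "weakly_clean_ring TYPE('a)"
  show "weakly_r_clean_ring TYPE('a)"
    unfolding weakly_r_clean_ring_def
  proof
    fix x :: 'a
    from H obtain u e where u: "u \<in> units_of_ring" and e: "e \<in> idems" and x: "x = u + e \<or> x = u - e"
      unfolding weakly_clean_ring_def weakly_clean_elem_def by blast
    from u obtain v where "u * v = 1" "v * u = 1" unfolding units_of_ring_def by blast
    hence "u = u * v * u" by simp
    hence "u \<in> regs" unfolding regs_def by blast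
    thus "weakly_r_clean_elem x" unfolding weakly_r_clean_elem_def using e x by blast
  qed
next
  assume H: "weakly_r_clean_ring TYPE('a)"
  have ab: "\<And>e x :: 'a. e * e = e \<Longrightarrow> e * x = x * e"
    using assms unfolding abelian_ring_def idems_def by blast
  show "weakly_clean_ring TYPE('a)"
    unfolding weakly_clean_ring_def
  proof
    fix x :: 'a
    from H obtain r g where r: "r \<in> regs" and g: "g \<in> idems" and x: "x = r + g \<or> x = r - g"
      unfolding weakly_r_clean_ring_def weakly_r_clean_elem_def by blast
    from r obtain y where "r = r * y * r" unfolding regs_def by blast
    from reg_decomp[OF ab this] obtain u v e where
      "u * v = 1" "v * u = 1" "e * e = e" "r = u * e" by blast
    moreover have "g * g = g" using g by (simp add: idems_def)
    ultimately show "weakly_clean_elem x" using clean_of_r[OF ab] x by blast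
  qed
qed

end
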